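(* Let $q$ be a prime power, let $n$ be an even positive integer, and let $Z$ be a set of $q^n$ matrices over $\mathbb{F}_{q^2}$ of size $n/2\times n/2$ with the property that $A-B$ is nonsingular for all distinct $A,B\in Z$. Let \[ Y=\left\{\begin{pmatrix} I & A^*\\ A & AA^*\end{pmatrix}:A\in Z\right\}\cup\left\{\begin{pmatrix} O & O\\ O & I\end{pmatrix}\right\}, \] where $O$ and $I$ are the zero and identity matrices of size $n/2\times n/2$. Then $Y$ is an $n$-code in $X(n,q)$ of size $q^n+1$.
   Context: For a matrix $A$ over $\mathbb{F}_{q^2}$, $A^*$ denotes the transpose of the matrix obtained by applying $x\mapsto x^q$ to each entry. $X(n,q)$ is the set of $n\times n$ matrices $A$ over $\mathbb{F}_{q^2}$ with $A^*=A$ (Hermitian matrices). A nonempty subset $Y\subseteq X(n,q)$ is a $d$-code if $\operatorname{rank}(A-B)\ge d$ for all distinct $A,B\in Y$. *)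

theory Defs
  imports "Jordan_Normal_Form.DL_Rank" "HOL-Computational_Algebra.Primes"
begin

text \<open>The field F_{q^2} is modelled by a finite field type 'a with CARD('a) = q^2.
  A^* is the transpose of the entrywise q-th power (Frobenius) of A.\<close>

definition mat_star :: "nat \<Rightarrow> 'a::field mat \<Rightarrow> 'a mat" where
  "mat_star q A = transpose_mat (map_mat (\<lambda>x. x ^ q) A)"

definition herm_X :: "nat \<Rightarrow> nat \<Rightarrow> 'a::field mat set" where
  "herm_X n q = {A \<in> carrier_mat n n. mat_star q A = A}"

definition is_d_code :: "nat \<Rightarrow> nat \<Rightarrow> nat \<Rightarrow> 'a::field mat set \<Rightarrow> bool" where
  "is_d_code n q d Y \<longleftrightarrow> Y \<noteq> {} \<and> Y \<subseteq> herm_X n q \<and>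
     (\<forall>A\<in>Y. \<forall>B\<in>Y. A \<noteq> B \<longrightarrow> d \<le> vec_space.rank n (A - B))"

definition prime_power :: "nat \<Rightarrow> bool" where
  "prime_power q \<longleftrightarrow> (\<exists>p k. prime p \<and> 0 < k \<and> q = p ^ k)"

end

theory Submission
  imports Defs "HOL-Number_Theory.Residues"
begin

lemma ff_power_card:
  fixes x :: "'a :: {finite,field}"
  shows   "x ^ card (UNIV :: 'a set) = x"
proof (cases "x = 0")
  case False
  have "x * (\<Prod>y\<in>UNIV-{0}. x * y) = x * x ^ (card (UNIV :: 'a set) - 1) * \<Prod>(UNIV-{0})"
    by (simp add: prod.distrib mult_ac)
  also have "x * x ^ (card (UNIV :: 'a set) - 1) = x ^ Suc (card (UNIV :: 'a set) - 1)"
    by (subst power_Suc) auto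
  also have "Suc (card (UNIV :: 'a set) - 1) = card (UNIV :: 'a set)"
    using finite_UNIV_card_ge_0[where ?'a = 'a] by simp
  also have "(\<Prod>y\<in>UNIV-{0}. x * y) = (\<Prod>y\<in>UNIV-{0}. y)"
    by (rule prod.reindex_bij_witness[of _ "\<lambda>y. y / x" "\<lambda>y. x * y"]) (use False in auto)
  finally show ?thesis
    by simp
qed (use finite_UNIV_card_ge_0[where ?'a = 'a] in auto)

lemma frob_facts:
  fixes q :: nat
  assumes "prime_power q" and "card (UNIV :: 'a::{finite,field} set) = q ^ 2"
  shows "\<forall>x y :: 'a. (x + y) ^ q = x ^ q + y ^ q" "\<forall>x :: 'a. (x ^ q) ^ q = x" "q > 0"
proof -
  obtain p k where p: "prime p" "0 < k" "q = p ^ k" using assms(1) unfolding prime_power_def by auto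
  have cpos: "CHAR('a) > 0" by (simp add: finite_imp_CHAR_pos)
  have cpr: "prime CHAR('a)" using prime_CHAR_semidom[OF cpos] .
  have "CHAR('a) dvd p ^ (k*2)" using CHAR_dvd_CARD[where 'a='a] assms(2) p(3)
    by (simp add: power_mult)
  hence "CHAR('a) dvd p" using cpr prime_dvd_power by blast
  hence cp: "CHAR('a) = p" using p(1) cpr by (simp add: primes_dvd_imp_eq)
  show "\<forall>x y :: 'a. (x + y) ^ q = x ^ q + y ^ q"
    using freshmans_dream'[OF cpr, of q k] cp p by auto
  show "\<forall>x :: 'a. (x ^ q) ^ q = x"
    using ff_power_card assms(2) by (metis power_mult power2_eq_square)
  show "q > 0" using p prime_gt_0_nat by simp
qed

locale frobq =
  fixes q :: nat and ty :: "'a::{finite,field} itself"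
  assumes fadd: "\<And>x y :: 'a. (x + y) ^ q = x ^ q + y ^ q"
    and finv: "\<And>x :: 'a. (x ^ q) ^ q = x" and qpos: "q > 0"
begin

lemma hom: "comm_ring_hom (\<lambda>x::'a. x ^ q)"
  by unfold_locales (auto simp: fadd qpos power_mult_distrib)

lemma star_carrier: "A \<in> carrier_mat n m \<Longrightarrow> mat_star q (A :: 'a mat) \<in> carrier_mat m n"
  by (simp add: mat_star_def)

lemma star_star: "mat_star q (mat_star q (A :: 'a mat)) = A"
  by (rule eq_matI) (auto simp: mat_star_def finv)

lemma star_mult: "A \<in> carrier_mat n k \<Longrightarrow> B \<in> carrier_mat k m \<Longrightarrow>
   mat_star q ((A :: 'a mat) * B) = mat_star q B * mat_star q A"
proof -
  assume A: "A \<in> carrier_mat n k" and B: "B \<in> carrier_mat k m"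
  interpret h: comm_ring_hom "\<lambda>x::'a. x ^ q" by (rule hom)
  show ?thesis unfolding mat_star_def h.mat_hom_mult[OF A B]
    by (rule transpose_mult[of _ n k]) (use A B in auto)
qed

lemma star_minus: "A \<in> carrier_mat n m \<Longrightarrow> B \<in> carrier_mat n m \<Longrightarrow>
   mat_star q ((A :: 'a mat) - B) = mat_star q A - mat_star q B"
proof -
  assume A: "A \<in> carrier_mat n m" and B: "B \<in> carrier_mat n m"
  interpret h: comm_ring_hom "\<lambda>x::'a. x ^ q" by (rule hom)
  show ?thesis by (rule eq_matI) (use A B in \<open>auto simp: mat_star_def h.hom_minus\<close>)
qed

lemma star_one: "mat_star q (1\<^sub>m n :: 'a mat) = 1\<^sub>m n"
  by (rule eq_matI) (auto simp: mat_star_def qpos)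

lemma star_zero: "mat_star q (0\<^sub>m n m :: 'a mat) = 0\<^sub>m m n"
  by (rule eq_matI) (auto simp: mat_star_def qpos)

lemma star_four: "A \<in> carrier_mat n1 m1 \<Longrightarrow> B \<in> carrier_mat n1 m2 \<Longrightarrow>
   C \<in> carrier_mat n2 m1 \<Longrightarrow> D \<in> carrier_mat n2 m2 \<Longrightarrow>
   mat_star q (four_block_mat A B C (D :: 'a mat)) =
   four_block_mat (mat_star q A) (mat_star q C) (mat_star q B) (mat_star q D)"
  unfolding mat_star_def
  by (subst map_four_block_mat, assumption+, subst transpose_four_block_mat) auto

lemma det_star: "A \<in> carrier_mat n n \<Longrightarrow> det (mat_star q (A :: 'a mat)) = (det A) ^ q"
proof -
  assume A: "A \<in> carrier_mat n n"
  interpret h: comm_ring_hom "\<lambda>x::'a. x ^ q" by (rule hom)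
  show ?thesis unfolding mat_star_def
    by (subst det_transpose[of _ n]) (use A in auto)
qed

end


lemma four_minus: "A1 \<in> carrier_mat n1 m1 \<Longrightarrow> B1 \<in> carrier_mat n1 m2 \<Longrightarrow>
   C1 \<in> carrier_mat n2 m1 \<Longrightarrow> D1 \<in> carrier_mat n2 m2 \<Longrightarrow>
   A2 \<in> carrier_mat n1 m1 \<Longrightarrow> B2 \<in> carrier_mat n1 m2 \<Longrightarrow>
   C2 \<in> carrier_mat n2 m1 \<Longrightarrow> D2 \<in> carrier_mat n2 m2 \<Longrightarrow>
   four_block_mat A1 B1 C1 (D1 :: 'a :: ab_group_add mat) - four_block_mat A2 B2 C2 D2 =
   four_block_mat (A1 - A2) (B1 - B2) (C1 - C2) (D1 - D2)"
  by (rule eq_matI) auto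

lemma four_eq_C: assumes "A \<in> carrier_mat m m" "B \<in> carrier_mat m m" "C \<in> carrier_mat m m" "D \<in> carrier_mat m m"
  "A' \<in> carrier_mat m m" "B' \<in> carrier_mat m m" "C' \<in> carrier_mat m m" "D' \<in> carrier_mat m m"
  and eq: "four_block_mat A B C D = four_block_mat A' B' C' D'"
  shows "C = C'"
proof (rule eq_matI)
  fix i j assume ij: "i < dim_row C'" "j < dim_col C'"
  have "four_block_mat A B C D $$ (m + i, j) = four_block_mat A' B' C' D' $$ (m + i, j)" using eq by simp
  thus "C $$ (i, j) = C' $$ (i, j)" using assms(1-8) ij by simp
qed (use assms in auto)

lemma full_rank: "(M :: 'a :: field mat) \<in> carrier_mat n n \<Longrightarrow> det M \<noteq> 0 \<Longrightarrow> vec_space.rank n M = n"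
  using vec_space.det_rank_iff by blast

lemma det_uminus_ne: "(M :: 'a :: field mat) \<in> carrier_mat n n \<Longrightarrow> det M \<noteq> 0 \<Longrightarrow> det (- M) \<noteq> 0"
proof -
  assume M: "M \<in> carrier_mat n n" and d: "det M \<noteq> 0"
  have "- M = (-1) \<cdot>\<^sub>m M" by (rule eq_matI) (use M in auto)
  thus ?thesis using d M by simp
qed

context frobq begin

lemma case1:
  assumes A: "A \<in> carrier_mat m m" and B: "B \<in> carrier_mat m m" and d: "det (A - B) \<noteq> (0::'a)"
  shows "det (four_block_mat (1\<^sub>m m) (mat_star q A) A (A * mat_star q A)
            - four_block_mat (1\<^sub>m m) (mat_star q B) B (B * mat_star q B)) \<noteq> 0"
proof -
  have sA: "mat_star q A \<in> carrier_mat m m" and sB: "mat_star q B \<in> carrier_mat m m"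
    using A B star_carrier by auto
  define C where "C = A - B"
  define X where "X = A * mat_star q A - B * mat_star q B"
  have C: "C \<in> carrier_mat m m" and X: "X \<in> carrier_mat m m" using A B sA sB by (auto simp: C_def X_def)
  have sC: "mat_star q C = mat_star q A - mat_star q B" unfolding C_def by (rule star_minus[OF A B])
  have sCc: "mat_star q C \<in> carrier_mat m m" using C star_carrier by auto
  have D: "four_block_mat (1\<^sub>m m) (mat_star q A) A (A * mat_star q A)
            - four_block_mat (1\<^sub>m m) (mat_star q B) B (B * mat_star q B)
        = four_block_mat (0\<^sub>m m m) (mat_star q C) C X"
    by (subst four_minus[of _ m m _ m _ m]) (use A B sA sB in \<open>auto simp: C_def X_def star_minus[OF A B] minus_r_inv_mat\<close>)
  define P where "P = four_block_mat (0\<^sub>m m m) (1\<^sub>m m) (1\<^sub>m m) (0\<^sub>m m m :: 'a mat)"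
  have P: "P \<in> carrier_mat (m+m) (m+m)" unfolding P_def by auto
  have PP: "P * P = 1\<^sub>m (m+m)" unfolding P_def
    by (subst mult_four_block_mat[of _ m m _ m _ m _ _ m _ m]) auto
  have "det P * det P = 1" using det_mult[OF P P] PP by simp
  hence dP: "det P \<noteq> 0" by auto
  have DP: "four_block_mat (0\<^sub>m m m) (mat_star q C) C X * P = four_block_mat (mat_star q C) (0\<^sub>m m m) X C"
    unfolding P_def
    by (subst mult_four_block_mat[of _ m m _ m _ m _ _ m _ m]) (use C X sCc in auto)
  have M: "four_block_mat (0\<^sub>m m m) (mat_star q C) C X \<in> carrier_mat (m+m) (m+m)" using C X sCc by auto
  have "det (four_block_mat (mat_star q C) (0\<^sub>m m m) X C) = det (mat_star q C) * det C"
    by (rule det_four_block_mat_upper_right_zero) (use C X sCc in auto)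
  also have "\<dots> = det C ^ q * det C" using det_star[OF C] by simp
  finally have e: "det (four_block_mat (mat_star q C) (0\<^sub>m m m) X C) = det C ^ q * det C" .
  have ne: "det C ^ q * det C \<noteq> 0" using d unfolding C_def by simp
  have "det (four_block_mat (0\<^sub>m m m) (mat_star q C) C X) * det P \<noteq> 0"
    using det_mult[OF M P] DP e ne by simp
  hence "det (four_block_mat (0\<^sub>m m m) (mat_star q C) C X) \<noteq> 0" by auto
  thus ?thesis using D by simp
qed

lemma case2:
  assumes A: "A \<in> carrier_mat m m"
  shows "det (four_block_mat (1\<^sub>m m) (mat_star q A) A (A * mat_star q A)
            - four_block_mat (0\<^sub>m m m) (0\<^sub>m m m) (0\<^sub>m m m) (1\<^sub>m m)) \<noteq> (0::'a)"
proof -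
  have sA: "mat_star q A \<in> carrier_mat m m" using A star_carrier by auto
  define X where "X = A * mat_star q A - 1\<^sub>m m"
  have X: "X \<in> carrier_mat m m" using A sA by (auto simp: X_def)
  have D: "four_block_mat (1\<^sub>m m) (mat_star q A) A (A * mat_star q A)
            - four_block_mat (0\<^sub>m m m) (0\<^sub>m m m) (0\<^sub>m m m) (1\<^sub>m m)
        = four_block_mat (1\<^sub>m m) (mat_star q A) A X"
    by (subst four_minus[of _ m m _ m _ m]) (use A sA in \<open>auto simp: X_def\<close>)
  define L where "L = four_block_mat (1\<^sub>m m) (0\<^sub>m m m) (- A) (1\<^sub>m m)"
  have L: "L \<in> carrier_mat (m+m) (m+m)" unfolding L_def using A by auto
  have dL: "det L = 1" unfolding L_def
    by (subst det_four_block_mat_upper_right_zero[of _ m]) (use A in auto)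
  have Y: "A * mat_star q A \<in> carrier_mat m m" using A sA by auto
  have e4: "- A * mat_star q A + 1\<^sub>m m * X = - 1\<^sub>m m" unfolding X_def
    using uminus_mult_left_mat[of A "mat_star q A"] A sA
    by (intro eq_matI) (use Y in auto)
  have e3: "- A * 1\<^sub>m m + 1\<^sub>m m * A = 0\<^sub>m m m"
    by (rule eq_matI) (use A in auto)
  have LD: "L * four_block_mat (1\<^sub>m m) (mat_star q A) A X = four_block_mat (1\<^sub>m m) (mat_star q A) (0\<^sub>m m m) (- 1\<^sub>m m)"
    unfolding L_def
    by (subst mult_four_block_mat[of _ m m _ m _ m _ _ m _ m]) (use A sA X e3 e4 in auto)
  have M: "four_block_mat (1\<^sub>m m) (mat_star q A) A X \<in> carrier_mat (m+m) (m+m)" using A X sA by auto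
  have "det (four_block_mat (1\<^sub>m m) (mat_star q A) (0\<^sub>m m m) (- 1\<^sub>m m :: 'a mat)) = det (1\<^sub>m m :: 'a mat) * det (- 1\<^sub>m m :: 'a mat)"
    by (rule det_four_block_mat_lower_left_zero) (use sA in auto)
  also have "\<dots> \<noteq> 0" using det_uminus_ne[of "1\<^sub>m m :: 'a mat" m] by simp
  finally have "det L * det (four_block_mat (1\<^sub>m m) (mat_star q A) A X) \<noteq> 0"
    using det_mult[OF L M] LD by simp
  thus ?thesis using D by simp
qed

end


theorem theorem4p3:
  fixes Z :: "'a::{finite,field} mat set" and q n :: nat
  assumes "prime_power q"
    and "card (UNIV :: 'a set) = q ^ 2"
    and "even n" and "0 < n"
    and "Z \<subseteq> carrier_mat (n div 2) (n div 2)"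
    and "card Z = q ^ n"
    and "\<forall>A\<in>Z. \<forall>B\<in>Z. A \<noteq> B \<longrightarrow> det (A - B) \<noteq> 0"
  shows "let m = n div 2;
             Y = (\<lambda>A. four_block_mat (1\<^sub>m m) (mat_star q A) A (A * mat_star q A)) ` Z
                 \<union> {four_block_mat (0\<^sub>m m m) (0\<^sub>m m m) (0\<^sub>m m m) (1\<^sub>m m)}
         in is_d_code n q n Y \<and> card Y = q ^ n + 1"
proof -
  note ff = frob_facts[OF assms(1) assms(2)]
  interpret frobq q "TYPE('a)" by unfold_locales (use ff in auto)
  define m where "m = n div 2"
  have nm: "n = m + m" using assms(3) unfolding m_def by auto
  have mpos: "m > 0" using nm assms(4) by auto
  define Mf where "Mf = (\<lambda>A::'a mat. four_block_mat (1\<^sub>m m) (mat_star q A) A (A * mat_star q A))"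
  define E where "E = four_block_mat (0\<^sub>m m m) (0\<^sub>m m m) (0\<^sub>m m m) (1\<^sub>m m :: 'a mat)"
  define Y where "Y = Mf ` Z \<union> {E}"
  have Zc: "\<And>A. A \<in> Z \<Longrightarrow> A \<in> carrier_mat m m" using assms(5) unfolding m_def by auto
  have Mc: "\<And>A. A \<in> Z \<Longrightarrow> Mf A \<in> carrier_mat n n"
  proof -
    fix A assume "A \<in> Z"
    hence A: "A \<in> carrier_mat m m" using Zc by auto
    have sA: "mat_star q A \<in> carrier_mat m m" using A star_carrier by auto
    show "Mf A \<in> carrier_mat n n" unfolding Mf_def nm using A sA by auto
  qed
  have Ec: "E \<in> carrier_mat n n" unfolding E_def nm by auto
  have herm: "Y \<subseteq> herm_X n q"
  proof
    fix M assume "M \<in> Y"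
    then consider "M = E" | A where "A \<in> Z" "M = Mf A" unfolding Y_def by auto
    then show "M \<in> herm_X n q"
    proof cases
      case 1
      have "mat_star q E = E" unfolding E_def
        by (subst star_four[of _ m m _ m _ m]) (auto simp: star_zero star_one)
      thus ?thesis using 1 Ec unfolding herm_X_def by auto
    next
      case 2
      have A: "A \<in> carrier_mat m m" using Zc 2 by auto
      have sA: "mat_star q A \<in> carrier_mat m m" using A star_carrier by auto
      have "mat_star q (Mf A) = Mf A" unfolding Mf_def
        by (subst star_four[of _ m m _ m _ m]) (use A sA in \<open>auto simp: star_one star_star star_mult[OF A sA]\<close>)
      thus ?thesis using 2 Mc unfolding herm_X_def by auto
    qed
  qed
  have ME: "\<And>A. A \<in> Z \<Longrightarrow> Mf A \<noteq> E"
  proof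
    fix A assume A: "A \<in> Z" and eq: "Mf A = E"
    have Ac: "A \<in> carrier_mat m m" using Zc A by auto
    have "Mf A $$ (0,0) = E $$ (0,0)" using eq by simp
    thus False using mpos Ac star_carrier[OF Ac] unfolding Mf_def E_def by simp
  qed
  have inj: "inj_on Mf Z"
  proof
    fix A B assume A: "A \<in> Z" and B: "B \<in> Z" and eq: "Mf A = Mf B"
    have Ac: "A \<in> carrier_mat m m" and Bc: "B \<in> carrier_mat m m" using Zc A B by auto
    show "A = B"
      by (rule four_eq_C[OF _ _ _ _ _ _ _ _ eq[unfolded Mf_def]])
        (use Ac Bc star_carrier[OF Ac] star_carrier[OF Bc] in auto)
  qed
  have rk: "\<forall>M\<in>Y. \<forall>N\<in>Y. M \<noteq> N \<longrightarrow> n \<le> vec_space.rank n (M - N)"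
  proof (intro ballI impI)
    fix M N assume M: "M \<in> Y" and N: "N \<in> Y" and MN: "M \<noteq> N"
    have Mc': "M \<in> carrier_mat n n" using M Mc Ec unfolding Y_def by auto
    have Nc': "N \<in> carrier_mat n n" using N Mc Ec unfolding Y_def by auto
    have MNc: "M - N \<in> carrier_mat n n" using Nc' Mc' by (simp add: minus_carrier_mat)
    have "det (M - N) \<noteq> 0"
    proof -
      consider A B where "A \<in> Z" "B \<in> Z" "M = Mf A" "N = Mf B"
        | A where "A \<in> Z" "M = Mf A" "N = E"
        | A where "A \<in> Z" "N = Mf A" "M = E"
        | "M = E" "N = E" using M N unfolding Y_def by auto
      then show ?thesis
      proof cases
        case 1
        hence "A \<noteq> B" using MN by auto
        hence "det (A - B) \<noteq> 0" using assms(7) 1 by auto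
        thus ?thesis using case1[OF Zc[OF 1(1)] Zc[OF 1(2)]] 1 unfolding Mf_def by auto
      next
        case 2
        thus ?thesis using case2[OF Zc[OF 2(1)]] unfolding Mf_def E_def by auto
      next
        case 3
        have "det (N - M) \<noteq> 0" using case2[OF Zc[OF 3(1)]] 3 unfolding Mf_def E_def by auto
        moreover have "M - N = - (N - M)" by (rule eq_matI) (use Mc' Nc' in auto)
        moreover have "N - M \<in> carrier_mat n n" using Nc' Mc' by (simp add: minus_carrier_mat)
        ultimately show ?thesis using det_uminus_ne by metis
      next
        case 4
        thus ?thesis using MN by auto
      qed
    qed
    thus "n \<le> vec_space.rank n (M - N)" using full_rank[OF MNc] by simp
  qed
  have cardY: "card Y = q ^ n + 1"
  proof -
    have "E \<notin> Mf ` Z" using ME by auto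
    have fZ: "finite Z" using assms(6) ff(3) by (metis card_ge_0_finite zero_less_power)
    have "card Y = card (Mf ` Z) + 1" unfolding Y_def
      using fZ \<open>E \<notin> Mf ` Z\<close> by simp
    also have "card (Mf ` Z) = card Z" using card_image[OF inj] .
    finally show ?thesis using assms(6) by simp
  qed
  have "is_d_code n q n Y" unfolding is_d_code_def using herm rk by (auto simp: Y_def)
  thus ?thesis using cardY unfolding Let_def m_def[symmetric] Y_def Mf_def E_def by simp
qed

end
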